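(* Let $A_1,A_2\in\mathbb{R}^{m\times n}$ and let $A_1=U_1-V_1$ and $A_2=U_2-V_2$ be two proper weak regular splittings of different types (one of type I and the other of type II). Suppose that $\rho(U_1^{\dagger}V_1)>0$ and $\rho(U_2^{\dagger}V_2)>0$. Assume that $V_1\neq 0$, $V_2\neq 0$ and $A_2^{\dagger}>A_1^{\dagger}\geq 0$. If $V_1\leq V_2$, then $\rho(U_1^{\dagger}V_1)<\rho(U_2^{\dagger}V_2)<1$.
   Context: $A^{\dagger}$ denotes the Moore–Penrose inverse and $\rho(\cdot)$ the spectral radius. Inequalities between matrices are entrywise; $X>Y$ means every entry of $X-Y$ is positive. A splitting $A=U-V$ is proper if $R(U)=R(A)$ and $N(U)=N(A)$. A proper splitting is a proper weak regular splitting of type I if $U^{\dagger}\geq 0$ and $U^{\dagger}V\geq 0$, and of type II if $U^{\dagger}\geq 0$ and $VU^{\dagger}\geq 0$. *)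

theory Defs
  imports "HOL-Analysis.Analysis"
begin

text \<open>Real m x n matrices are rendered as real^'n^'m (rows indexed by 'm).\<close>

definition mp_inverse :: "real^'n^'m \<Rightarrow> real^'m^'n" where
  "mp_inverse A = (THE X. A ** X ** A = A \<and> X ** A ** X = X \<and>
      transpose (A ** X) = A ** X \<and> transpose (X ** A) = X ** A)"

definition mat_range :: "real^'n^'m \<Rightarrow> (real^'m) set" where
  "mat_range A = range (\<lambda>x. A *v x)"

definition mat_null :: "real^'n^'m \<Rightarrow> (real^'n) set" where
  "mat_null A = {x. A *v x = 0}"

text \<open>Entrywise orderings.\<close>
definition mat_nonneg :: "real^'n^'m \<Rightarrow> bool" where
  "mat_nonneg X \<longleftrightarrow> (\<forall>i j. X $ i $ j \<ge> 0)"

definition mat_le :: "real^'n^'m \<Rightarrow> real^'n^'m \<Rightarrow> bool" where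
  "mat_le X Y \<longleftrightarrow> (\<forall>i j. X $ i $ j \<le> Y $ i $ j)"

definition mat_gt :: "real^'n^'m \<Rightarrow> real^'n^'m \<Rightarrow> bool" where
  "mat_gt X Y \<longleftrightarrow> (\<forall>i j. X $ i $ j > Y $ i $ j)"

text \<open>Spectral radius: maximum modulus of the (complex) eigenvalues.\<close>
definition complex_eigenvalues :: "real^'n^'n \<Rightarrow> complex set" where
  "complex_eigenvalues M = {l. \<exists>v::complex^'n. v \<noteq> 0 \<and>
      (\<chi> i j. complex_of_real (M $ i $ j)) *v v = l *s v}"

definition spectral_radius :: "real^'n^'n \<Rightarrow> real" where
  "spectral_radius M = Max (cmod ` complex_eigenvalues M)"

definition proper_splitting :: "real^'n^'m \<Rightarrow> real^'n^'m \<Rightarrow> real^'n^'m \<Rightarrow> bool" where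
  "proper_splitting A U V \<longleftrightarrow> A = U - V \<and> mat_range U = mat_range A \<and> mat_null U = mat_null A"

definition pwr_splitting_I :: "real^'n^'m \<Rightarrow> real^'n^'m \<Rightarrow> real^'n^'m \<Rightarrow> bool" where
  "pwr_splitting_I A U V \<longleftrightarrow> proper_splitting A U V \<and>
     mat_nonneg (mp_inverse U) \<and> mat_nonneg (mp_inverse U ** V)"

definition pwr_splitting_II :: "real^'n^'m \<Rightarrow> real^'n^'m \<Rightarrow> real^'n^'m \<Rightarrow> bool" where
  "pwr_splitting_II A U V \<longleftrightarrow> proper_splitting A U V \<and>
     mat_nonneg (mp_inverse U) \<and> mat_nonneg (V ** mp_inverse U)"

end

theory Submission
  imports Defs "HOL-Computational_Algebra.Fundamental_Theorem_Algebra"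
begin


definition cmat :: "real^'n^'m \<Rightarrow> complex^'n^'m" where
  "cmat M = (\<chi> i j. complex_of_real (M $ i $ j))"

lemma eig_def2: "complex_eigenvalues M = {l. \<exists>v. v \<noteq> 0 \<and> cmat M *v v = l *s v}"
  unfolding complex_eigenvalues_def cmat_def by simp

definition cpoly :: "complex^'n^'n \<Rightarrow> complex poly" where
  "cpoly C = (\<Sum>p | p permutes (UNIV::'n set). smult (of_int (sign p))
       (\<Prod>i\<in>UNIV. [: - C $ i $ p i, (if p i = i then 1 else 0) :]))"

lemma poly_cpoly: fixes C :: "complex^'n^'n" shows "poly (cpoly C) z = det (mat z - C)"
  unfolding cpoly_def det_def poly_sum
proof (intro sum.cong refl)
  fix p :: "'n \<Rightarrow> 'n"
  show "poly (smult (of_int (sign p)) (\<Prod>i\<in>UNIV. [: - C $ i $ p i, (if p i = i then 1 else 0) :])) z =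
    of_int (sign p) * (\<Prod>i\<in>UNIV. (mat z - C) $ i $ p i)"
    unfolding poly_smult poly_prod
    by (intro arg_cong2[where f="(*)"] refl prod.cong) (simp_all add: mat_def eq_commute)
qed

lemma mat_mult_vec: "(mat l :: 'a::comm_ring_1^'n^'n) *v v = l *s v"
proof -
  have "(\<Sum>j\<in>UNIV. (if i = j then l else 0) * v $ j) = l * v $ i" for i
  proof -
    have "(\<Sum>j\<in>UNIV. (if i = j then l else 0) * v $ j) = (\<Sum>j\<in>UNIV. if i = j then l * v $ j else 0)"
      by (rule sum.cong) auto
    then show ?thesis by simp
  qed
  then show ?thesis by (simp add: vec_eq_iff matrix_vector_mult_def mat_def)
qed

lemma eig_iff_det: "(\<exists>v. v \<noteq> 0 \<and> C *v v = l *s v) \<longleftrightarrow> det (mat l - C) = (0::complex)"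
proof -
  have "det (mat l - C) \<noteq> 0 \<longleftrightarrow> inj ((*v) (mat l - C))"
    using det_nz_iff_inj_gen[of "(*v) (mat l - C)"] by simp
  also have "\<dots> \<longleftrightarrow> (\<forall>v. (mat l - C) *v v = 0 \<longrightarrow> v = 0)"
    by (rule vec.linear_inj_iff_eq_0) simp
  also have "\<dots> \<longleftrightarrow> (\<forall>v. C *v v = l *s v \<longrightarrow> v = 0)"
  proof -
    have "(mat l - C) *v v = 0 \<longleftrightarrow> C *v v = l *s v" for v
    proof -
      have "(mat l - C) *v v = l *s v - C *v v"
        by (simp add: matrix_vector_mult_diff_rdistrib mat_mult_vec)
      then show ?thesis by (metis right_minus_eq)
    qed
    then show ?thesis by simp
  qed
  finally show ?thesis by blast
qed

lemma coeff_cpoly: "coeff (cpoly (C::complex^'n^'n)) CARD('n) = 1"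
proof -
  let ?f = "\<lambda>p i. [: - C $ i $ p i, (if p i = i then 1 else 0) :]"
  have other: "coeff (\<Prod>i\<in>UNIV. ?f p i) CARD('n) = 0" if "p permutes UNIV" "p \<noteq> id" for p
  proof -
    obtain k where k: "p k \<noteq> k" using \<open>p \<noteq> id\<close> by (auto simp: fun_eq_iff)
    have "degree (\<Prod>i\<in>UNIV. ?f p i) \<le> (\<Sum>i\<in>UNIV. degree (?f p i))"
      using degree_prod_sum_le[of UNIV "?f p"] by (simp add: o_def)
    also have "\<dots> < (\<Sum>i\<in>(UNIV::'n set). 1)"
    proof (rule sum_strict_mono_ex1)
      show "\<forall>x\<in>UNIV. degree (?f p x) \<le> 1" by simp
      show "\<exists>a\<in>UNIV. degree (?f p a) < 1" using k by (intro bexI[of _ k]) auto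
    qed simp
    finally show ?thesis by (simp add: coeff_eq_0)
  qed
  have idc: "coeff (\<Prod>i\<in>UNIV. ?f id i) CARD('n) = 1"
  proof -
    have nz: "\<forall>i\<in>UNIV. ?f id i \<noteq> 0" by simp
    have "degree (\<Prod>i\<in>UNIV. ?f id i) = CARD('n)"
      using degree_prod_eq_sum_degree[OF nz] by simp
    moreover have "lead_coeff (\<Prod>i\<in>UNIV. ?f id i) = 1"
      by (simp add: lead_coeff_prod)
    ultimately show ?thesis by simp
  qed
  have "coeff (cpoly C) CARD('n) = (\<Sum>p | p permutes (UNIV::'n set). of_int (sign p) * coeff (\<Prod>i\<in>UNIV. ?f p i) CARD('n))"
    unfolding cpoly_def coeff_sum by simp
  also have "\<dots> = of_int (sign (id::'n\<Rightarrow>'n)) * coeff (\<Prod>i\<in>UNIV. ?f id i) CARD('n)"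
  proof -
    let ?g = "\<lambda>p. of_int (sign p) * coeff (\<Prod>i\<in>UNIV. ?f p i) CARD('n)"
    have fin: "finite {p. p permutes (UNIV::'n set)}" by (simp add: finite_permutations)
    have "sum ?g {p. p permutes UNIV} = ?g id + sum ?g ({p. p permutes UNIV} - {id})"
      by (rule sum.remove[OF fin]) (simp add: permutes_id)
    also have "sum ?g ({p. p permutes UNIV} - {id}) = 0"
      by (rule sum.neutral) (auto simp: other)
    finally show ?thesis by simp
  qed
  also have "\<dots> = 1" using idc by (simp add: sign_id)
  finally show ?thesis .
qed



lemma eig_roots: "complex_eigenvalues M = {l. poly (cpoly (cmat M)) l = 0}"
  unfolding eig_def2 poly_cpoly eig_iff_det ..

lemma cpoly_nz: "cpoly (C::complex^'n^'n) \<noteq> 0"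
  using coeff_cpoly[of C] by auto

lemma eig_finite: "finite (complex_eigenvalues M)"
  unfolding eig_roots by (rule poly_roots_finite[OF cpoly_nz])

lemma eig_nonempty: "complex_eigenvalues (M::real^'n^'n) \<noteq> {}"
proof -
  have "CARD('n) \<le> degree (cpoly (cmat M))"
    by (rule le_degree) (simp add: coeff_cpoly)
  then have "degree (cpoly (cmat M)) \<noteq> 0" using zero_less_card_finite[where 'a='n] by linarith
  then have "\<not> constant (poly (cpoly (cmat M)))" by (simp add: constant_degree)
  from fundamental_theorem_of_algebra[OF this] obtain z where "poly (cpoly (cmat M)) z = 0" by blast
  then show ?thesis unfolding eig_roots by blast
qed

lemma sr_ge: "l \<in> complex_eigenvalues M \<Longrightarrow> cmod l \<le> spectral_radius M"
  unfolding spectral_radius_def by (rule Max_ge) (auto simp: eig_finite)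

lemma sr_in: "\<exists>l\<in>complex_eigenvalues (M::real^'n^'n). cmod l = spectral_radius M"
proof -
  have "spectral_radius M \<in> cmod ` complex_eigenvalues M"
    unfolding spectral_radius_def by (rule Max_in) (auto simp: eig_finite eig_nonempty)
  then show ?thesis by auto
qed

lemma sr_eqI: "l \<in> complex_eigenvalues M \<Longrightarrow> cmod l = r \<Longrightarrow>
   (\<And>k. k \<in> complex_eigenvalues M \<Longrightarrow> cmod k \<le> r) \<Longrightarrow> spectral_radius M = r"
  unfolding spectral_radius_def by (rule Max_eqI) (auto simp: eig_finite)

lemma cmat_transpose: "cmat (transpose M) = transpose (cmat M)"
  by (simp add: cmat_def transpose_def vec_eq_iff)

lemma transpose_diff': "transpose (A - B) = transpose A - (transpose B :: 'a::ring^'n^'m)"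
  by (simp add: transpose_def vec_eq_iff)

lemma eig_transpose: "complex_eigenvalues (transpose M) = complex_eigenvalues (M::real^'n^'n)"
proof -
  have "det (mat l - cmat (transpose M)) = det (mat l - cmat M)" for l
  proof -
    have "mat l - cmat (transpose M) = transpose (mat l - cmat M)"
      by (simp add: cmat_transpose transpose_diff' transpose_mat)
    then show ?thesis by simp
  qed
  then show ?thesis unfolding eig_def2 eig_iff_det by simp
qed

lemma sr_transpose: "spectral_radius (transpose M) = spectral_radius (M::real^'n^'n)"
  unfolding spectral_radius_def eig_transpose ..

lemma cmat_mult: "cmat (A ** B) = cmat A ** cmat B"
  by (simp add: cmat_def matrix_matrix_mult_def vec_eq_iff)

lemma eig_swap:
  fixes A :: "real^'k^'n" and B :: "real^'n^'k"
  assumes "l \<in> complex_eigenvalues (A ** B)" "l \<noteq> 0"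
  shows "l \<in> complex_eigenvalues (B ** A)"
proof -
  obtain v where v: "v \<noteq> 0" "(cmat A ** cmat B) *v v = l *s v"
    using assms(1) unfolding eig_def2 cmat_mult by blast
  let ?w = "cmat B *v v"
  have Aw: "cmat A *v ?w = l *s v" using v(2) by (simp add: matrix_vector_mul_assoc)
  then have w0: "?w \<noteq> 0" using v(1) assms(2) by auto
  have "(cmat B ** cmat A) *v ?w = cmat B *v (cmat A *v ?w)"
    by (simp add: matrix_vector_mul_assoc matrix_mul_assoc)
  also have "\<dots> = cmat B *v (l *s v)" using Aw by simp
  also have "\<dots> = l *s ?w"
    by (simp add: vec_eq_iff matrix_vector_mult_def sum_distrib_left algebra_simps)
  finally show ?thesis using w0 unfolding eig_def2 cmat_mult by blast
qed

lemma sr_swap: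
  fixes A :: "real^'k^'n" and B :: "real^'n^'k"
  assumes "spectral_radius (A ** B) > 0"
  shows "spectral_radius (B ** A) = spectral_radius (A ** B)"
proof -
  obtain l where l: "l \<in> complex_eigenvalues (A ** B)" "cmod l = spectral_radius (A ** B)"
    using sr_in by blast
  then have "l \<noteq> 0" using assms by auto
  then have "l \<in> complex_eigenvalues (B ** A)" using eig_swap l(1) by blast
  then have ge: "spectral_radius (A ** B) \<le> spectral_radius (B ** A)" using sr_ge l(2) by metis
  obtain k where k: "k \<in> complex_eigenvalues (B ** A)" "cmod k = spectral_radius (B ** A)"
    using sr_in by blast
  then have "k \<noteq> 0" using assms ge by auto
  then have "k \<in> complex_eigenvalues (A ** B)" using eig_swap k(1) by blast
  then have "spectral_radius (B ** A) \<le> spectral_radius (A ** B)" using sr_ge k(2) by metis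
  with ge show ?thesis by simp
qed



definition psimplex :: "(real^'n) set" where
  "psimplex = {x. (\<forall>i. 0 \<le> x $ i) \<and> (\<Sum>i\<in>UNIV. x $ i) = 1}"

lemma psimplex_compact: "compact (psimplex :: (real^'n) set)"
proof -
  have "psimplex \<subseteq> cball (0::real^'n) 1"
  proof
    fix x :: "real^'n" assume x: "x \<in> psimplex"
    have "norm x \<le> (\<Sum>i\<in>UNIV. \<bar>x $ i\<bar>)" by (rule norm_le_l1_cart)
    also have "\<dots> = 1" using x by (simp add: psimplex_def)
    finally show "x \<in> cball 0 1" by simp
  qed
  then have b: "bounded (psimplex :: (real^'n) set)" using bounded_cball bounded_subset by blast
  have c: "continuous_on UNIV (\<lambda>x::real^'n. x $ i)" for i
    by (rule continuous_on_component[OF continuous_on_id])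
  have "closed {x::real^'n. \<forall>i. 0 \<le> x $ i}"
    by (intro closed_Collect_all closed_Collect_le continuous_on_const c)
  moreover have "closed {x::real^'n. (\<Sum>i\<in>UNIV. x $ i) = 1}"
    by (intro closed_Collect_eq continuous_on_const continuous_on_sum c)
  ultimately have "closed ({x::real^'n. \<forall>i. 0 \<le> x $ i} \<inter> {x::real^'n. (\<Sum>i\<in>UNIV. x $ i) = 1})"
    by (rule closed_Int)
  moreover have "{x::real^'n. \<forall>i. 0 \<le> x $ i} \<inter> {x::real^'n. (\<Sum>i\<in>UNIV. x $ i) = 1} = psimplex"
    by (auto simp: psimplex_def)
  ultimately have "closed (psimplex :: (real^'n) set)" by simp
  with b show ?thesis by (simp add: compact_eq_bounded_closed)
qed

lemma psimplex_convex: "convex (psimplex :: (real^'n) set)"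
  unfolding convex_def psimplex_def
  by (auto simp: sum.distrib sum_distrib_left[symmetric])

lemma psimplex_nonempty: "(\<chi> i. 1 / real CARD('n)) \<in> (psimplex :: (real^'n) set)"
  by (simp add: psimplex_def)

lemma psimplex_nz: "x \<in> psimplex \<Longrightarrow> x \<noteq> 0"
  by (auto simp: psimplex_def)

lemma mv_nonneg: "mat_nonneg M \<Longrightarrow> (\<forall>j. 0 \<le> x $ j) \<Longrightarrow> 0 \<le> (M *v x) $ i"
  unfolding mat_nonneg_def matrix_vector_mult_def by (auto intro!: sum_nonneg)

lemma eps_eigen:
  fixes M :: "real^'n^'n"
  assumes M: "mat_nonneg M" and e: "e > 0"
  shows "\<exists>x c. x \<in> psimplex \<and> (\<forall>i. 0 < x $ i) \<and> c \<ge> 0 \<and> (\<forall>i. (M *v x) $ i + e = c * x $ i)"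
proof -
  define d where "d x = (\<Sum>i\<in>UNIV. (M *v x) $ i + e)" for x :: "real^'n"
  define f where "f x = inverse (d x) *\<^sub>R (M *v x + e *\<^sub>R vec 1)" for x :: "real^'n"
  have dpos: "d x > 0" if "x \<in> psimplex" for x
  proof -
    have "(\<Sum>i\<in>(UNIV::'n set). (M *v x) $ i + e) > 0"
      using that e by (intro sum_pos) (auto simp: psimplex_def intro!: add_nonneg_pos mv_nonneg[OF M])
    then show ?thesis by (simp add: d_def)
  qed
  have cont: "continuous_on psimplex f"
    unfolding f_def d_def
    by (intro continuous_intros continuous_on_component) (use dpos in \<open>force simp: d_def\<close>)+
  have fim: "f \<in> psimplex \<rightarrow> psimplex"
  proof
    fix x :: "real^'n" assume x: "x \<in> psimplex"
    have "0 \<le> f x $ i" for i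
    proof -
      have "0 \<le> (M *v x) $ i" using x by (intro mv_nonneg[OF M]) (auto simp: psimplex_def)
      then show ?thesis using dpos[OF x] e by (simp add: f_def)
    qed
    moreover have "(\<Sum>i\<in>UNIV. f x $ i) = 1"
    proof -
      have "(\<Sum>i\<in>UNIV. f x $ i) = inverse (d x) * d x"
        by (simp add: f_def d_def sum_distrib_left)
      then show ?thesis using dpos[OF x] by simp
    qed
    ultimately show "f x \<in> psimplex" by (simp add: psimplex_def)
  qed
  obtain x where x: "x \<in> psimplex" "f x = x"
    using brouwer[OF psimplex_compact psimplex_convex _ cont fim] psimplex_nonempty by blast
  have eq: "(M *v x) $ i + e = d x * x $ i" for i
  proof -
    have "x $ i = f x $ i" using x(2) by simp
    also have "\<dots> = inverse (d x) * ((M *v x) $ i + e)" by (simp add: f_def)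
    finally have "x $ i = inverse (d x) * ((M *v x) $ i + e)" .
    then show ?thesis using dpos[OF x(1)] by (simp add: field_simps)
  qed
  show ?thesis
  proof (intro exI conjI allI)
    show "x \<in> psimplex" by fact
    show "0 \<le> d x" using dpos[OF x(1)] by simp
    fix i
    show "(M *v x) $ i + e = d x * x $ i" by (rule eq)
    have "0 < (M *v x) $ i + e" using x(1) e by (auto simp: psimplex_def intro!: add_nonneg_pos mv_nonneg[OF M])
    then show "0 < x $ i" using eq[of i] dpos[OF x(1)] by (simp add: zero_less_mult_iff)
  qed
qed



lemma eig_bound:
  fixes M :: "real^'n^'n"
  assumes M: "mat_nonneg M" and xpos: "\<forall>i. 0 < x $ i" and le: "\<forall>i. (M *v x) $ i \<le> c * x $ i"
    and l: "l \<in> complex_eigenvalues M"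
  shows "cmod l \<le> c"
proof -
  obtain v where v: "v \<noteq> 0" "cmat M *v v = l *s v" using l unfolding eig_def2 by blast
  have comp: "l * v $ i = (\<Sum>j\<in>UNIV. complex_of_real (M $ i $ j) * v $ j)" for i
  proof -
    have "(cmat M *v v) $ i = (l *s v) $ i" using v(2) by simp
    then show ?thesis by (simp add: matrix_vector_mult_def cmat_def)
  qed
  define t where "t j = cmod (v $ j) / x $ j" for j
  have "Max (range t) \<in> range t" by (rule Max_in) auto
  then obtain k where k: "t k = Max (range t)" by (metis (mono_tags) imageE)
  have tk: "t j \<le> t k" for j unfolding k by (rule Max_ge) auto
  obtain j0 where j0: "v $ j0 \<noteq> 0" using v(1) by (auto simp: vec_eq_iff)
  have "t j0 > 0" using j0 xpos by (simp add: t_def)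
  then have tkpos: "t k > 0" using tk[of j0] by linarith
  have vb: "cmod (v $ j) \<le> t k * x $ j" for j
    using tk[of j] xpos by (simp add: t_def divide_le_eq)
  have vk: "cmod (v $ k) = t k * x $ k" using xpos[rule_format, of k] by (simp add: t_def)
  have vkpos: "cmod (v $ k) > 0" using vk tkpos xpos by simp
  have "cmod l * cmod (v $ k) = cmod (\<Sum>j\<in>UNIV. complex_of_real (M $ k $ j) * v $ j)"
    using comp[of k] by (metis norm_mult)
  also have "\<dots> \<le> (\<Sum>j\<in>UNIV. cmod (complex_of_real (M $ k $ j) * v $ j))"
    by (rule norm_sum)
  also have "\<dots> = (\<Sum>j\<in>UNIV. M $ k $ j * cmod (v $ j))"
    using M by (intro sum.cong refl) (simp add: norm_mult mat_nonneg_def)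
  also have "\<dots> \<le> (\<Sum>j\<in>UNIV. M $ k $ j * (t k * x $ j))"
    using M vb by (intro sum_mono mult_left_mono) (auto simp: mat_nonneg_def)
  also have "\<dots> = t k * (M *v x) $ k"
    by (simp add: matrix_vector_mult_def sum_distrib_left algebra_simps)
  also have "\<dots> \<le> t k * (c * x $ k)"
    using le tkpos by (simp add: mult_left_mono)
  also have "\<dots> = c * cmod (v $ k)" using vk by simp
  finally have "cmod l * cmod (v $ k) \<le> c * cmod (v $ k)" .
  then show ?thesis using vkpos by simp
qed

definition cvec :: "real^'n \<Rightarrow> complex^'n" where
  "cvec x = (\<chi> i. complex_of_real (x $ i))"

lemma cmat_cvec: "cmat M *v cvec x = cvec (M *v x)"
  by (simp add: vec_eq_iff cmat_def matrix_vector_mult_def cvec_def)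

lemma cvec_eq0: "cvec x = 0 \<longleftrightarrow> x = 0"
  by (simp add: vec_eq_iff cvec_def)

lemma real_eig: "x \<noteq> 0 \<Longrightarrow> M *v x = c *s x \<Longrightarrow> complex_of_real c \<in> complex_eigenvalues M"
proof -
  assume x: "x \<noteq> 0" and Mx: "M *v x = c *s x"
  have "cmat M *v cvec x = cvec (c *s x)" by (simp add: cmat_cvec Mx)
  also have "\<dots> = complex_of_real c *s cvec x" by (simp add: cvec_def vec_eq_iff)
  finally show ?thesis unfolding eig_def2 using x cvec_eq0 by blast
qed

theorem perron:
  fixes M :: "real^'n^'n"
  assumes M: "mat_nonneg M"
  shows "\<exists>x. (\<forall>i. 0 \<le> x $ i) \<and> x \<noteq> 0 \<and> M *v x = spectral_radius M *s x"
proof -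
  define ep where "ep k = inverse (real (Suc k))" for k :: nat
  define P where "P k x c \<longleftrightarrow> x \<in> psimplex \<and> (\<forall>i. 0 < x $ i) \<and> c \<ge> 0 \<and> (\<forall>i. (M *v x) $ i + ep k = c * x $ i)" for k x c
  have "\<forall>k. \<exists>x c. P k x c"
    using eps_eigen[OF M] by (simp add: ep_def P_def)
  then obtain X where "\<forall>k. \<exists>c. P k (X k) c" by (rule choice[THEN exE])
  then obtain C where PC: "\<forall>k. P k (X k) (C k)" by (rule choice[THEN exE])
  have XC: "\<And>k. X k \<in> psimplex" "\<And>k i. 0 < X k $ i" "\<And>k. C k \<ge> 0"
     "\<And>k i. (M *v X k) $ i + ep k = C k * X k $ i"
    using PC unfolding P_def by blast+
  have ep01: "0 < ep k" "ep k \<le> 1" for k by (auto simp: ep_def field_simps)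
  define B where "B = (\<Sum>i\<in>UNIV. (\<Sum>j\<in>UNIV. M $ i $ j) + 1)"
  have CB: "C k \<le> B" for k
  proof -
    have "C k = (\<Sum>i\<in>UNIV. C k * X k $ i)" using XC(1)[of k]
      by (simp add: psimplex_def sum_distrib_left[symmetric])
    also have "\<dots> = (\<Sum>i\<in>UNIV. (M *v X k) $ i + ep k)" using XC(4) by simp
    also have "\<dots> \<le> (\<Sum>i\<in>UNIV. (\<Sum>j\<in>UNIV. M $ i $ j) + 1)"
    proof (rule sum_mono)
      fix i
      have xle: "X k $ j \<le> 1" for j
      proof -
        have "X k $ j \<le> (\<Sum>i\<in>UNIV. X k $ i)"
          using XC(1)[of k] by (intro member_le_sum) (auto simp: psimplex_def)
        then show ?thesis using XC(1)[of k] by (simp add: psimplex_def)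
      qed
      have "(M *v X k) $ i = (\<Sum>j\<in>UNIV. M $ i $ j * X k $ j)" by (simp add: matrix_vector_mult_def)
      also have "\<dots> \<le> (\<Sum>j\<in>UNIV. M $ i $ j)"
        using M xle by (intro sum_mono) (auto simp: mat_nonneg_def intro: mult_left_le)
      finally show "(M *v X k) $ i + ep k \<le> (\<Sum>j\<in>UNIV. M $ i $ j) + 1" using ep01[of k] by linarith
    qed
    finally show ?thesis by (simp add: B_def)
  qed
  let ?K = "psimplex \<times> {0..B}"
  have "compact ?K" using psimplex_compact by (intro compact_Times) auto
  then have sc: "seq_compact ?K" by (rule compact_imp_seq_compact)
  have mem: "(X n, C n) \<in> ?K" for n using XC(1,3) CB by auto
  obtain l r where lK: "l \<in> ?K" and r: "strict_mono r"
    and lim: "((\<lambda>k. (X k, C k)) \<circ> r) \<longlonglongrightarrow> l"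
    using sc[unfolded seq_compact_def, rule_format, of "\<lambda>k. (X k, C k)", OF mem] by blast
  obtain x c where lxc: "l = (x, c)" by (cases l)
  have limX: "(\<lambda>k. X (r k)) \<longlonglongrightarrow> x" using tendsto_fst[OF lim] by (simp add: o_def lxc)
  have limC: "(\<lambda>k. C (r k)) \<longlonglongrightarrow> c" using tendsto_snd[OF lim] by (simp add: o_def lxc)
  have limE: "(\<lambda>k. ep (r k)) \<longlonglongrightarrow> 0"
    using LIMSEQ_subseq_LIMSEQ[OF LIMSEQ_inverse_real_of_nat r] by (simp add: ep_def o_def)
  have x: "x \<in> psimplex" "0 \<le> c" using lK lxc by auto
  have eq: "(M *v x) $ i = c * x $ i" for i
  proof -
    have L: "(\<lambda>k. (\<Sum>j\<in>UNIV. M $ i $ j * X (r k) $ j) + ep (r k)) \<longlonglongrightarrow> (\<Sum>j\<in>UNIV. M $ i $ j * x $ j) + 0"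
      by (intro tendsto_add limE tendsto_sum tendsto_mult_left tendsto_vec_nth limX)
    have R: "(\<lambda>k. C (r k) * X (r k) $ i) \<longlonglongrightarrow> c * x $ i"
      by (intro tendsto_mult limC tendsto_vec_nth limX)
    have "(\<lambda>k. (\<Sum>j\<in>UNIV. M $ i $ j * X (r k) $ j) + ep (r k)) = (\<lambda>k. C (r k) * X (r k) $ i)"
      using XC(4) by (simp add: matrix_vector_mult_def)
    with L R have "(\<Sum>j\<in>UNIV. M $ i $ j * x $ j) + 0 = c * x $ i" using LIMSEQ_unique by metis
    then show ?thesis by (simp add: matrix_vector_mult_def)
  qed
  have Mx: "M *v x = c *s x" using eq by (simp add: vec_eq_iff)
  have xnz: "x \<noteq> 0" using x(1) by (rule psimplex_nz)
  have "spectral_radius M = c"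
  proof (rule sr_eqI)
    show "complex_of_real c \<in> complex_eigenvalues M" by (rule real_eig[OF xnz Mx])
    show "cmod (complex_of_real c) = c" using x(2) by simp
    fix k assume k: "k \<in> complex_eigenvalues M"
    have "cmod k \<le> C (r n)" for n
    proof (rule eig_bound[OF M _ _ k])
      show "\<forall>i. 0 < X (r n) $ i" using XC(2) by blast
      show "\<forall>i. (M *v X (r n)) $ i \<le> C (r n) * X (r n) $ i"
      proof
        fix i
        show "(M *v X (r n)) $ i \<le> C (r n) * X (r n) $ i"
          using XC(4)[of "r n" i] ep01(1)[of "r n"] by linarith
      qed
    qed
    then show "cmod k \<le> c" by (intro LIMSEQ_le_const[OF limC]) auto
  qed
  then show ?thesis using Mx xnz x(1) by (auto simp: psimplex_def)
qed



definition oproj :: "'a::euclidean_space set \<Rightarrow> 'a \<Rightarrow> 'a" where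
  "oproj S x = (SOME y. y \<in> S \<and> (\<forall>w\<in>S. (x - y) \<bullet> w = 0))"

lemma oproj_ex:
  fixes S :: "'a::euclidean_space set"
  assumes "subspace S"
  shows "\<exists>y. y \<in> S \<and> (\<forall>w\<in>S. (x - y) \<bullet> w = 0)"
proof -
  obtain y z where yz: "y \<in> span S" "\<And>w. w \<in> span S \<Longrightarrow> orthogonal z w" "x = y + z"
    using orthogonal_subspace_decomp_exists[of S x] by blast
  have sp: "span S = S" using assms by (simp add: span_eq_iff)
  show ?thesis
  proof (intro exI conjI ballI)
    show "y \<in> S" using yz(1) sp by simp
    fix w assume "w \<in> S"
    then show "(x - y) \<bullet> w = 0" using yz(2)[of w] yz(3) sp by (simp add: orthogonal_def)
  qed
qed

lemma oproj:
  assumes "subspace S"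
  shows "oproj S x \<in> S" "w \<in> S \<Longrightarrow> (x - oproj S x) \<bullet> w = 0"
  using someI_ex[OF oproj_ex[OF assms, of x]] unfolding oproj_def[symmetric] by auto

lemma oproj_unique:
  assumes S: "subspace S" and y: "y \<in> S" "\<forall>w\<in>S. (x - y) \<bullet> w = 0"
  shows "oproj S x = y"
proof -
  let ?d = "oproj S x - y"
  have dS: "?d \<in> S" using S y(1) oproj(1)[OF S] by (simp add: subspace_diff)
  have "?d \<bullet> w = 0" if "w \<in> S" for w
  proof -
    have "?d = (x - y) - (x - oproj S x)" by simp
    then have "?d \<bullet> w = (x - y) \<bullet> w - (x - oproj S x) \<bullet> w" by (simp add: inner_diff_left)
    then show ?thesis using y(2) oproj(2)[OF S that] that by simp
  qed
  from this[OF dS] show ?thesis by simp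
qed

lemma oproj_id: "subspace S \<Longrightarrow> x \<in> S \<Longrightarrow> oproj S x = x"
  by (rule oproj_unique) auto

lemma oproj_sym:
  assumes S: "subspace S"
  shows "oproj S x \<bullet> z = x \<bullet> oproj S z"
proof -
  have "x \<bullet> oproj S z = (oproj S x + (x - oproj S x)) \<bullet> oproj S z" by simp
  also have "\<dots> = oproj S x \<bullet> oproj S z"
  proof -
    have "(x - oproj S x) \<bullet> oproj S z = 0" by (rule oproj(2)[OF S], rule oproj(1)[OF S])
    then show ?thesis by (simp add: inner_diff_left)
  qed
  finally have 1: "x \<bullet> oproj S z = oproj S x \<bullet> oproj S z" .
  have "oproj S x \<bullet> z = oproj S x \<bullet> (oproj S z + (z - oproj S z))" by simp
  also have "\<dots> = oproj S x \<bullet> oproj S z"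
  proof -
    have "(z - oproj S z) \<bullet> oproj S x = 0" by (rule oproj(2)[OF S], rule oproj(1)[OF S])
    then show ?thesis by (simp add: inner_diff_left inner_commute[of "oproj S x"])
  qed
  finally show ?thesis using 1 by simp
qed

lemma mv_axis: "((M::real^'n^'m) *v axis i 1) $ j = M $ j $ i"
proof -
  have "(M *v axis i 1) $ j = (\<Sum>k\<in>UNIV. if k = i then M $ j $ k else 0)"
  proof -
    have "(\<Sum>k\<in>UNIV. M $ j $ k * axis i 1 $ k) = (\<Sum>k\<in>UNIV. if k = i then M $ j $ k else 0)"
      by (rule sum.cong) (auto simp: axis_def)
    then show ?thesis by (simp add: matrix_vector_mult_def)
  qed
  then show ?thesis by simp
qed

lemma oproj_add: "subspace S \<Longrightarrow> oproj S (x + y) = oproj S x + oproj S y"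
proof (rule oproj_unique)
  assume S: "subspace S"
  show "oproj S x + oproj S y \<in> S" by (rule subspace_add[OF S oproj(1)[OF S] oproj(1)[OF S]])
  show "\<forall>w\<in>S. (x + y - (oproj S x + oproj S y)) \<bullet> w = 0"
  proof
    fix w assume w: "w \<in> S"
    have "(x - oproj S x) \<bullet> w = 0" by (rule oproj(2)[OF S w])
    moreover have "(y - oproj S y) \<bullet> w = 0" by (rule oproj(2)[OF S w])
    moreover have "x + y - (oproj S x + oproj S y) = (x - oproj S x) + (y - oproj S y)" by simp
    ultimately show "(x + y - (oproj S x + oproj S y)) \<bullet> w = 0" by (simp only: inner_add_left)
  qed
qed

lemma oproj_scale: "subspace S \<Longrightarrow> oproj S (c *\<^sub>R x) = c *\<^sub>R oproj S x"
proof (rule oproj_unique)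
  assume S: "subspace S"
  show "c *\<^sub>R oproj S x \<in> S" by (rule subspace_scale[OF S oproj(1)[OF S]])
  show "\<forall>w\<in>S. (c *\<^sub>R x - c *\<^sub>R oproj S x) \<bullet> w = 0"
  proof
    fix w assume "w \<in> S"
    then have "(x - oproj S x) \<bullet> w = 0" by (rule oproj(2)[OF S])
    then show "(c *\<^sub>R x - c *\<^sub>R oproj S x) \<bullet> w = 0"
      by (metis inner_scaleR_left mult_zero_right scaleR_right_diff_distrib)
  qed
qed

lemma sym_matrix:
  fixes M :: "real^'n^'n"
  assumes "\<And>y z. (M *v y) \<bullet> z = y \<bullet> (M *v z)"
  shows "transpose M = M"
proof -
  have "M $ j $ i = M $ i $ j" for i j
  proof -
    have "(M *v axis i 1) \<bullet> axis j 1 = axis i 1 \<bullet> (M *v axis j 1)" by (rule assms)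
    then show ?thesis
      by (simp add: inner_axis inner_commute[of "axis i 1"] mv_axis)
  qed
  then show ?thesis by (simp add: transpose_def vec_eq_iff)
qed

definition pinv :: "real^'n^'m \<Rightarrow> real^'m \<Rightarrow> real^'n" where
  "pinv A y = (THE x. (\<forall>w. A *v w = 0 \<longrightarrow> x \<bullet> w = 0) \<and> A *v x = oproj (range ((*v) A)) y)"

lemma subspace_null: "subspace {x. (A::real^'n^'m) *v x = 0}"
  using real_vector.linear_subspace_kernel[OF matrix_vector_mul_linear[of A]] by simp

lemma subspace_rng: "subspace (range ((*v) (A::real^'n^'m)))"
  using real_vector.linear_subspace_image[OF matrix_vector_mul_linear[of A] subspace_UNIV] by simp

lemma pinv_char:
  fixes A :: "real^'n^'m"
  shows "(\<forall>w. A *v w = 0 \<longrightarrow> pinv A y \<bullet> w = 0) \<and> A *v pinv A y = oproj (range ((*v) A)) y"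
proof -
  let ?N = "{x. A *v x = (0::real^'m)}"
  let ?P = "\<lambda>x. (\<forall>w. A *v w = 0 \<longrightarrow> x \<bullet> w = 0) \<and> A *v x = oproj (range ((*v) A)) y"
  obtain z where z: "A *v z = oproj (range ((*v) A)) y"
    using oproj(1)[OF subspace_rng[of A], of y] by auto
  let ?x = "z - oproj ?N z"
  have ex: "?P ?x"
  proof
    show "\<forall>w. A *v w = 0 \<longrightarrow> ?x \<bullet> w = 0" using oproj(2)[OF subspace_null[of A]] by auto
    have "A *v oproj ?N z = 0" using oproj(1)[OF subspace_null[of A], of z] by simp
    then show "A *v ?x = oproj (range ((*v) A)) y" using z by (simp add: matrix_vector_mult_diff_distrib)
  qed
  have un: "x' = ?x" if "?P x'" for x'
  proof -
    let ?d = "x' - ?x"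
    have "A *v ?d = 0" using that ex by (simp add: matrix_vector_mult_diff_distrib)
    moreover have "x' \<bullet> ?d = 0 \<and> ?x \<bullet> ?d = 0" if "A *v ?d = 0"
      using \<open>?P x'\<close> ex that by blast
    ultimately have "?d \<bullet> ?d = 0" by (simp only: inner_diff_left)
    then show ?thesis by simp
  qed
  have "?P (THE x. ?P x)" by (rule theI[of ?P ?x, OF ex un])
  then show ?thesis unfolding pinv_def .
qed

lemma pinv_unique:
  fixes A :: "real^'n^'m"
  assumes "\<forall>w. A *v w = 0 \<longrightarrow> x \<bullet> w = 0" "A *v x = oproj (range ((*v) A)) y"
  shows "pinv A y = x"
proof -
  let ?d = "pinv A y - x"
  have "A *v ?d = 0" using assms pinv_char[of A y] by (simp add: matrix_vector_mult_diff_distrib)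
  then have "pinv A y \<bullet> ?d = 0 \<and> x \<bullet> ?d = 0" using assms pinv_char[of A y] by blast
  then have "?d \<bullet> ?d = 0" by (simp only: inner_diff_left)
  then show ?thesis by simp
qed

lemma pinv_linear: "linear (pinv A)"
proof (rule linearI)
  fix y1 y2
  show "pinv A (y1 + y2) = pinv A y1 + pinv A y2"
  proof (rule pinv_unique)
    show "\<forall>w. A *v w = 0 \<longrightarrow> (pinv A y1 + pinv A y2) \<bullet> w = 0"
      using pinv_char[of A y1] pinv_char[of A y2] by (simp add: inner_add_left)
    have "oproj (range ((*v) A)) (y1 + y2) = oproj (range ((*v) A)) y1 + oproj (range ((*v) A)) y2"
      by (rule oproj_add[OF subspace_rng])
    then show "A *v (pinv A y1 + pinv A y2) = oproj (range ((*v) A)) (y1 + y2)"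
      using pinv_char[of A y1] pinv_char[of A y2] by (simp add: matrix_vector_right_distrib)
  qed
next
  fix c :: real and y
  show "pinv A (c *\<^sub>R y) = c *\<^sub>R pinv A y"
  proof (rule pinv_unique)
    show "\<forall>w. A *v w = 0 \<longrightarrow> (c *\<^sub>R pinv A y) \<bullet> w = 0"
      using pinv_char[of A y] by simp
    have "oproj (range ((*v) A)) (c *\<^sub>R y) = c *\<^sub>R oproj (range ((*v) A)) y"
      by (rule oproj_scale[OF subspace_rng])
    then show "A *v (c *\<^sub>R pinv A y) = oproj (range ((*v) A)) (c *\<^sub>R y)"
      using pinv_char[of A y] by (simp add: matrix_vector_mult_scaleR)
  qed
qed



definition MPP :: "real^'n^'m \<Rightarrow> real^'m^'n \<Rightarrow> bool" where
  "MPP A X \<longleftrightarrow> A ** X ** A = A \<and> X ** A ** X = X \<and>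
      transpose (A ** X) = A ** X \<and> transpose (X ** A) = X ** A"

lemma pinv_mat: "matrix (pinv A) *v y = pinv A y"
  using pinv_linear[of A] by (simp add: matrix_works linear_linear)

lemma MPP_exists: "MPP A (matrix (pinv A))"
proof -
  let ?X = "matrix (pinv A)"
  let ?R = "range ((*v) A)"
  let ?N = "{x. A *v x = 0}"
  have XA: "pinv A (A *v z) = z - oproj ?N z" for z
  proof (rule pinv_unique)
    show "\<forall>w. A *v w = 0 \<longrightarrow> (z - oproj ?N z) \<bullet> w = 0"
      using oproj(2)[OF subspace_null[of A], of _ z] by blast
    have "A *v oproj ?N z = 0" using oproj(1)[OF subspace_null[of A], of z] by simp
    then show "A *v (z - oproj ?N z) = oproj ?R (A *v z)"
      using oproj_id[OF subspace_rng[of A], of "A *v z"] by (simp add: matrix_vector_mult_diff_distrib)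
  qed
  have 1: "A ** ?X ** A = A"
  proof -
    have "(A ** ?X ** A) *v z = A *v z" for z
    proof -
      have "(A ** ?X ** A) *v z = A *v pinv A (A *v z)"
        by (simp add: matrix_vector_mul_assoc[symmetric] pinv_mat)
      also have "\<dots> = oproj ?R (A *v z)" using pinv_char[of A "A *v z"] by simp
      also have "\<dots> = A *v z" by (rule oproj_id[OF subspace_rng]) simp
      finally show ?thesis .
    qed
    then show ?thesis by (simp add: matrix_eq)
  qed
  have 2: "?X ** A ** ?X = ?X"
  proof -
    have "(?X ** A ** ?X) *v y = ?X *v y" for y
    proof -
      have "(?X ** A ** ?X) *v y = pinv A (A *v pinv A y)"
        by (simp add: matrix_vector_mul_assoc[symmetric] pinv_mat)
      also have "\<dots> = pinv A y"
      proof (rule pinv_unique)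
        show "\<forall>w. A *v w = 0 \<longrightarrow> pinv A y \<bullet> w = 0" using pinv_char[of A y] by blast
        show "A *v pinv A y = oproj ?R (A *v pinv A y)"
          by (rule oproj_id[OF subspace_rng, symmetric]) simp
      qed
      finally show ?thesis by (simp add: pinv_mat)
    qed
    then show ?thesis by (simp add: matrix_eq)
  qed
  have 3: "transpose (A ** ?X) = A ** ?X"
  proof (rule sym_matrix)
    fix y z
    have e: "(A ** ?X) *v v = oproj ?R v" for v
      using pinv_char[of A v] by (simp add: matrix_vector_mul_assoc[symmetric] pinv_mat)
    show "((A ** ?X) *v y) \<bullet> z = y \<bullet> ((A ** ?X) *v z)"
      unfolding e by (rule oproj_sym[OF subspace_rng])
  qed
  have 4: "transpose (?X ** A) = ?X ** A"
  proof (rule sym_matrix)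
    fix y z
    have e: "(?X ** A) *v v = v - oproj ?N v" for v
      by (simp add: matrix_vector_mul_assoc[symmetric] pinv_mat XA)
    have "oproj ?N y \<bullet> z = y \<bullet> oproj ?N z" by (rule oproj_sym[OF subspace_null])
    then show "((?X ** A) *v y) \<bullet> z = y \<bullet> ((?X ** A) *v z)"
      unfolding e by (simp add: inner_diff_left inner_diff_right)
  qed
  show ?thesis using 1 2 3 4 by (simp add: MPP_def)
qed

lemma MPP_unique:
  assumes "MPP A X" "MPP A Y"
  shows "X = Y"
proof -
  have X1: "A ** X ** A = A" and X2: "X ** A ** X = X" and X3: "transpose (A ** X) = A ** X"
    and X4: "transpose (X ** A) = X ** A" using assms(1) by (auto simp: MPP_def)
  have Y1: "A ** Y ** A = A" and Y2: "Y ** A ** Y = Y" and Y3: "transpose (A ** Y) = A ** Y"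
    and Y4: "transpose (Y ** A) = Y ** A" using assms(2) by (auto simp: MPP_def)
  have s1: "X ** transpose X ** transpose A = X"
  proof -
    have "X ** transpose X ** transpose A = X ** transpose (A ** X)"
      by (simp add: matrix_transpose_mul matrix_mul_assoc)
    also have "\<dots> = X ** (A ** X)" using X3 by simp
    also have "\<dots> = X" using X2 by (simp add: matrix_mul_assoc)
    finally show ?thesis .
  qed
  have s2: "transpose A ** A ** Y = transpose A"
  proof -
    have "transpose A ** A ** Y = transpose A ** (A ** Y)" by (simp add: matrix_mul_assoc)
    also have "\<dots> = transpose A ** transpose (A ** Y)" using Y3 by simp
    also have "\<dots> = transpose (A ** Y ** A)" by (simp add: matrix_transpose_mul)
    also have "\<dots> = transpose A" using Y1 by simp
    finally show ?thesis .
  qed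
  have s3: "X ** A ** Y = X"
  proof -
    have "X ** A ** Y = (X ** transpose X ** transpose A) ** A ** Y" using s1 by simp
    also have "\<dots> = (X ** transpose X) ** (transpose A ** A ** Y)" by (simp add: matrix_mul_assoc)
    also have "\<dots> = (X ** transpose X) ** transpose A" using s2 by simp
    also have "\<dots> = X" using s1 .
    finally show ?thesis .
  qed
  have s4: "transpose A ** transpose Y ** Y = Y"
  proof -
    have "transpose A ** transpose Y ** Y = transpose (Y ** A) ** Y" by (simp add: matrix_transpose_mul)
    also have "\<dots> = Y ** A ** Y" using Y4 by simp
    also have "\<dots> = Y" using Y2 .
    finally show ?thesis .
  qed
  have s5: "X ** A ** transpose A = transpose A"
  proof -
    have "X ** A ** transpose A = transpose (X ** A) ** transpose A" using X4 by simp
    also have "\<dots> = transpose (A ** (X ** A))" by (simp add: matrix_transpose_mul)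
    also have "\<dots> = transpose A" using X1 by (simp add: matrix_mul_assoc)
    finally show ?thesis .
  qed
  have s6: "X ** A ** Y = Y"
  proof -
    have "X ** A ** Y = (X ** A) ** (transpose A ** transpose Y ** Y)" using s4 by simp
    also have "\<dots> = (X ** A ** transpose A) ** transpose Y ** Y" by (simp add: matrix_mul_assoc)
    also have "\<dots> = transpose A ** transpose Y ** Y" using s5 by simp
    also have "\<dots> = Y" using s4 .
    finally show ?thesis .
  qed
  show ?thesis using s3 s6 by simp
qed

lemma mp_MPP: "MPP A (mp_inverse A)"
proof -
  have "\<exists>!X. MPP A X" using MPP_exists MPP_unique by blast
  then have "MPP A (THE X. MPP A X)" by (rule theI')
  then show ?thesis unfolding mp_inverse_def MPP_def[abs_def] by simp
qed

lemma mp1: "A ** mp_inverse A ** A = A"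
  and mp2: "mp_inverse A ** A ** mp_inverse A = mp_inverse A"
  and mp3: "transpose (A ** mp_inverse A) = A ** mp_inverse A"
  and mp4: "transpose (mp_inverse A ** A) = mp_inverse A ** A"
  using mp_MPP[of A] by (auto simp: MPP_def)



lemma mm_diff_left: "(A::real^'n^'m) ** (B - C) = A ** B - A ** C"
  by (simp add: matrix_matrix_mult_def vec_eq_iff sum_subtractf algebra_simps)

lemma mm_diff_right: "((B::real^'n^'m) - C) ** (D::real^'k^'n) = B ** D - C ** D"
  by (simp add: matrix_matrix_mult_def vec_eq_iff sum_subtractf algebra_simps)

lemma range_sub_mp:
  fixes P :: "real^'n^'m" and Q :: "real^'k^'m"
  assumes "mat_range P \<subseteq> mat_range Q"
  shows "Q ** mp_inverse Q ** P = P"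
proof -
  have "(Q ** mp_inverse Q ** P) *v z = P *v z" for z
  proof -
    obtain w where w: "P *v z = Q *v w" using assms unfolding mat_range_def by blast
    have "(Q ** mp_inverse Q ** P) *v z = (Q ** mp_inverse Q) *v (P *v z)"
      by (simp add: matrix_vector_mul_assoc)
    also have "\<dots> = (Q ** mp_inverse Q ** Q) *v w" by (simp add: w matrix_vector_mul_assoc)
    also have "\<dots> = P *v z" by (simp add: mp1 w)
    finally show ?thesis .
  qed
  then show ?thesis by (simp add: matrix_eq)
qed

lemma null_sub_mp:
  fixes P :: "real^'n^'m" and Q :: "real^'n^'k"
  assumes "mat_null Q \<subseteq> mat_null P"
  shows "P ** mp_inverse Q ** Q = P"
proof -
  have "(P ** mp_inverse Q ** Q) *v z = P *v z" for z
  proof -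
    let ?w = "z - (mp_inverse Q ** Q) *v z"
    have "Q *v ?w = Q *v z - (Q ** mp_inverse Q ** Q) *v z"
      by (simp add: matrix_vector_mult_diff_distrib matrix_vector_mul_assoc matrix_mul_assoc)
    also have "\<dots> = 0" by (simp add: mp1)
    finally have "?w \<in> mat_null Q" by (simp add: mat_null_def)
    then have "P *v ?w = 0" using assms by (auto simp: mat_null_def)
    then show ?thesis
      by (simp add: matrix_vector_mult_diff_distrib matrix_vector_mul_assoc matrix_mul_assoc)
  qed
  then show ?thesis by (simp add: matrix_eq)
qed

lemma split_facts:
  assumes "proper_splitting A U V"
  shows "U ** mp_inverse U ** A = A" "A ** mp_inverse A ** U = U"
        "A ** mp_inverse U ** U = A" "U ** mp_inverse A ** A = U"
  using assms unfolding proper_splitting_def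
  by (auto intro!: range_sub_mp null_sub_mp)

lemma typeI_id:
  assumes "proper_splitting A U V"
  shows "mp_inverse A = mp_inverse U + mp_inverse U ** V ** mp_inverse A"
proof -
  let ?X = "mp_inverse U" and ?Y = "mp_inverse A"
  note f = split_facts[OF assms]
  have AUV: "V = U - A" using assms by (simp add: proper_splitting_def)
  have XUY: "?X ** U ** ?Y = ?Y"
  proof -
    have Y: "?Y = transpose A ** transpose ?Y ** ?Y"
    proof -
      have "?Y = ?Y ** A ** ?Y" by (simp add: mp2)
      also have "\<dots> = transpose (?Y ** A) ** ?Y" by (simp add: mp4)
      also have "\<dots> = transpose A ** transpose ?Y ** ?Y" by (simp add: matrix_transpose_mul)
      finally show ?thesis .
    qed
    have XUA: "?X ** U ** transpose A = transpose A"
    proof -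
      have "?X ** U ** transpose A = transpose (?X ** U) ** transpose A" by (simp add: mp4)
      also have "\<dots> = transpose (A ** (?X ** U))" by (simp add: matrix_transpose_mul)
      also have "\<dots> = transpose A" using f(3) by (simp add: matrix_mul_assoc)
      finally show ?thesis .
    qed
    have "?X ** U ** ?Y = ?X ** U ** (transpose A ** transpose ?Y ** ?Y)" using Y by simp
    also have "\<dots> = (?X ** U ** transpose A) ** transpose ?Y ** ?Y" by (simp add: matrix_mul_assoc)
    also have "\<dots> = ?Y" using XUA Y by simp
    finally show ?thesis .
  qed
  have XAY: "?X ** A ** ?Y = ?X"
  proof -
    have X: "?X ** transpose ?X ** transpose U = ?X"
    proof -
      have "?X ** transpose ?X ** transpose U = ?X ** transpose (U ** ?X)"
        by (simp add: matrix_transpose_mul matrix_mul_assoc)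
      also have "\<dots> = ?X ** U ** ?X" by (simp add: mp3 matrix_mul_assoc)
      also have "\<dots> = ?X" by (simp add: mp2)
      finally show ?thesis .
    qed
    have UAY: "transpose U ** A ** ?Y = transpose U"
    proof -
      have "transpose U ** A ** ?Y = transpose U ** transpose (A ** ?Y)" by (simp add: mp3 matrix_mul_assoc)
      also have "\<dots> = transpose (A ** ?Y ** U)" by (simp add: matrix_transpose_mul)
      also have "\<dots> = transpose U" using f(2) by simp
      finally show ?thesis .
    qed
    have "?X ** A ** ?Y = (?X ** transpose ?X ** transpose U) ** A ** ?Y" using X by simp
    also have "\<dots> = (?X ** transpose ?X) ** (transpose U ** A ** ?Y)" by (simp add: matrix_mul_assoc)
    also have "\<dots> = ?X" using UAY X by simp
    finally show ?thesis .
  qed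
  have "?X ** V ** ?Y = ?Y - ?X"
    unfolding AUV mm_diff_left mm_diff_right using XUY XAY by simp
  then show ?thesis by simp
qed

lemma typeII_id:
  assumes "proper_splitting A U V"
  shows "mp_inverse A = mp_inverse U + mp_inverse A ** V ** mp_inverse U"
proof -
  let ?X = "mp_inverse U" and ?Y = "mp_inverse A"
  note f = split_facts[OF assms]
  have AUV: "V = U - A" using assms by (simp add: proper_splitting_def)
  have YAX: "?Y ** A ** ?X = ?X"
  proof -
    have X: "?X = transpose U ** transpose ?X ** ?X"
    proof -
      have "?X = ?X ** U ** ?X" by (simp add: mp2)
      also have "\<dots> = transpose (?X ** U) ** ?X" by (simp add: mp4)
      also have "\<dots> = transpose U ** transpose ?X ** ?X" by (simp add: matrix_transpose_mul)
      finally show ?thesis .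
    qed
    have YAU: "?Y ** A ** transpose U = transpose U"
    proof -
      have "?Y ** A ** transpose U = transpose (?Y ** A) ** transpose U" by (simp add: mp4)
      also have "\<dots> = transpose (U ** (?Y ** A))" by (simp add: matrix_transpose_mul)
      also have "\<dots> = transpose U" using f(4) by (simp add: matrix_mul_assoc)
      finally show ?thesis .
    qed
    have "?Y ** A ** ?X = ?Y ** A ** (transpose U ** transpose ?X ** ?X)" using X by simp
    also have "\<dots> = (?Y ** A ** transpose U) ** transpose ?X ** ?X" by (simp add: matrix_mul_assoc)
    also have "\<dots> = ?X" using YAU X by simp
    finally show ?thesis .
  qed
  have YUX: "?Y ** U ** ?X = ?Y"
  proof -
    have Y: "?Y ** transpose ?Y ** transpose A = ?Y"
    proof -
      have "?Y ** transpose ?Y ** transpose A = ?Y ** transpose (A ** ?Y)"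
        by (simp add: matrix_transpose_mul matrix_mul_assoc)
      also have "\<dots> = ?Y ** A ** ?Y" by (simp add: mp3 matrix_mul_assoc)
      also have "\<dots> = ?Y" by (simp add: mp2)
      finally show ?thesis .
    qed
    have AUX: "transpose A ** U ** ?X = transpose A"
    proof -
      have "transpose A ** U ** ?X = transpose A ** transpose (U ** ?X)" by (simp add: mp3 matrix_mul_assoc)
      also have "\<dots> = transpose (U ** ?X ** A)" by (simp add: matrix_transpose_mul)
      also have "\<dots> = transpose A" using f(1) by simp
      finally show ?thesis .
    qed
    have "?Y ** U ** ?X = (?Y ** transpose ?Y ** transpose A) ** U ** ?X" using Y by simp
    also have "\<dots> = (?Y ** transpose ?Y) ** (transpose A ** U ** ?X)" by (simp add: matrix_mul_assoc)
    also have "\<dots> = ?Y" using AUX Y by simp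
    finally show ?thesis .
  qed
  have "?Y ** V ** ?X = ?Y - ?X"
    unfolding AUV mm_diff_left mm_diff_right using YUX YAX by simp
  then show ?thesis by simp
qed



lemma vm_nonneg: "mat_nonneg M \<Longrightarrow> (\<forall>j. 0 \<le> y $ j) \<Longrightarrow> 0 \<le> (y v* M) $ i"
  unfolding mat_nonneg_def vector_matrix_mult_def by (auto intro!: sum_nonneg)

lemma nonneg_mult: "mat_nonneg A \<Longrightarrow> mat_nonneg B \<Longrightarrow> mat_nonneg (A ** B)"
  unfolding mat_nonneg_def matrix_matrix_mult_def by (auto intro!: sum_nonneg)

lemma nonneg_transpose: "mat_nonneg A \<Longrightarrow> mat_nonneg (transpose A)"
  unfolding mat_nonneg_def transpose_def by auto

lemma not_one_pos:
  fixes p w :: "real^'k"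
  assumes "\<forall>i. 0 \<le> p $ i" "\<forall>i. 0 \<le> w $ i" "p = (1 - r) *\<^sub>R w" "p \<noteq> 0"
  shows "r < 1"
proof (rule ccontr)
  assume "\<not> r < 1"
  then have "p $ i \<le> 0" for i using assms(2,3) by (simp add: mult_nonpos_nonneg)
  then have "p = 0" using assms(1) by (simp add: vec_eq_iff order_antisym)
  with assms(4) show False by simp
qed

lemma typeI_vec:
  fixes A U V :: "real^'n^'m"
  assumes sp: "pwr_splitting_I A U V" and Ynn: "mat_nonneg (mp_inverse A)"
    and rpos: "spectral_radius (mp_inverse U ** V) > 0"
  shows "\<exists>y. (\<forall>i. 0 \<le> y $ i) \<and> y \<noteq> 0 \<and> (\<forall>i. 0 \<le> (y v* mp_inverse U) $ i) \<and>
      (y v* mp_inverse U) v* V = spectral_radius (mp_inverse U ** V) *\<^sub>R y \<and>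
      y v* mp_inverse U = (1 - spectral_radius (mp_inverse U ** V)) *\<^sub>R (y v* mp_inverse A) \<and>
      spectral_radius (mp_inverse U ** V) < 1"
proof -
  let ?X = "mp_inverse U" and ?Y = "mp_inverse A" and ?r = "spectral_radius (mp_inverse U ** V)"
  have Xnn: "mat_nonneg ?X" and Tnn: "mat_nonneg (?X ** V)" and pr: "proper_splitting A U V"
    using sp by (auto simp: pwr_splitting_I_def)
  obtain y where y: "\<forall>i. 0 \<le> y $ i" "y \<noteq> 0"
    "transpose (?X ** V) *v y = spectral_radius (transpose (?X ** V)) *s y"
    using perron[OF nonneg_transpose[OF Tnn]] by blast
  have yT: "y v* (?X ** V) = ?r *\<^sub>R y" using y(3) by (simp add: sr_transpose scalar_mult_eq_scaleR)
  let ?p = "y v* ?X"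
  have pV: "?p v* V = ?r *\<^sub>R y" using yT by (simp add: vector_matrix_mul_assoc)
  have "y v* ?Y = y v* (?X + ?X ** V ** ?Y)" using typeI_id[OF pr] by simp
  also have "\<dots> = ?p + (y v* (?X ** V)) v* ?Y"
    by (simp add: vector_matrix_mult_add_rdistrib vector_matrix_mul_assoc)
  also have "\<dots> = ?p + ?r *\<^sub>R (y v* ?Y)" by (simp add: yT scaleR_vector_matrix_assoc)
  finally have "y v* ?Y = ?p + ?r *\<^sub>R (y v* ?Y)" .
  then have peq: "?p = (1 - ?r) *\<^sub>R (y v* ?Y)"
    by (simp add: algebra_simps)
  have pnn: "\<forall>i. 0 \<le> ?p $ i" using vm_nonneg[OF Xnn] y(1) by blast
  have pnz: "?p \<noteq> 0"
  proof
    assume "?p = 0"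
    then have "?r *\<^sub>R y = 0" using pV by simp
    with rpos y(2) show False by simp
  qed
  have "?r < 1" by (rule not_one_pos[OF pnn _ peq pnz]) (use vm_nonneg[OF Ynn] y(1) in blast)
  then show ?thesis using y(1,2) pnn pV peq by blast
qed

lemma typeII_vec:
  fixes A U V :: "real^'n^'m"
  assumes sp: "pwr_splitting_II A U V" and Ynn: "mat_nonneg (mp_inverse A)"
    and rpos: "spectral_radius (mp_inverse U ** V) > 0"
  shows "\<exists>x. (\<forall>i. 0 \<le> x $ i) \<and> x \<noteq> 0 \<and> (\<forall>i. 0 \<le> (mp_inverse U *v x) $ i) \<and>
      V *v (mp_inverse U *v x) = spectral_radius (mp_inverse U ** V) *\<^sub>R x \<and>
      mp_inverse U *v x = (1 - spectral_radius (mp_inverse U ** V)) *\<^sub>R (mp_inverse A *v x) \<and>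
      spectral_radius (mp_inverse U ** V) < 1"
proof -
  let ?X = "mp_inverse U" and ?Y = "mp_inverse A" and ?r = "spectral_radius (mp_inverse U ** V)"
  have Xnn: "mat_nonneg ?X" and Snn: "mat_nonneg (V ** ?X)" and pr: "proper_splitting A U V"
    using sp by (auto simp: pwr_splitting_II_def)
  have srs: "spectral_radius (V ** ?X) = ?r" by (rule sr_swap[OF rpos])
  obtain x where x: "\<forall>i. 0 \<le> x $ i" "x \<noteq> 0"
    "(V ** ?X) *v x = spectral_radius (V ** ?X) *s x"
    using perron[OF Snn] by blast
  have Sx: "(V ** ?X) *v x = ?r *\<^sub>R x" using x(3) by (simp add: srs scalar_mult_eq_scaleR)
  let ?q = "?X *v x"
  have Vq: "V *v ?q = ?r *\<^sub>R x" using Sx by (simp add: matrix_vector_mul_assoc)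
  have "?Y *v x = (?X + ?Y ** V ** ?X) *v x" using typeII_id[OF pr] by simp
  also have "\<dots> = ?q + ?Y *v ((V ** ?X) *v x)"
    by (simp add: matrix_vector_mult_add_rdistrib matrix_vector_mul_assoc matrix_mul_assoc)
  also have "\<dots> = ?q + ?r *\<^sub>R (?Y *v x)" by (simp add: Sx matrix_vector_mult_scaleR)
  finally have "?Y *v x = ?q + ?r *\<^sub>R (?Y *v x)" .
  then have qeq: "?q = (1 - ?r) *\<^sub>R (?Y *v x)"
    by (simp add: algebra_simps)
  have qnn: "\<forall>i. 0 \<le> ?q $ i" using mv_nonneg[OF Xnn] x(1) by blast
  have qnz: "?q \<noteq> 0"
  proof
    assume "?q = 0"
    then have "?r *\<^sub>R x = 0" using Vq by simp
    with rpos x(2) show False by simp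
  qed
  have "?r < 1" by (rule not_one_pos[OF qnn _ qeq qnz]) (use mv_nonneg[OF Ynn] x(1) in blast)
  then show ?thesis using x(1,2) qnn Vq qeq by blast
qed

lemma bil_mono:
  fixes V1 V2 :: "real^'n^'m"
  assumes "\<forall>i. 0 \<le> p $ i" "\<forall>j. 0 \<le> q $ j" "mat_le V1 V2"
  shows "p \<bullet> (V1 *v q) \<le> p \<bullet> (V2 *v q)"
  unfolding inner_vec_def matrix_vector_mult_def inner_real_def using assms
  by (auto simp: mat_le_def intro!: sum_mono mult_left_mono mult_right_mono)

lemma bil_nonneg:
  fixes Y :: "real^'n^'m"
  assumes "\<forall>i. 0 \<le> y $ i" "\<forall>j. 0 \<le> x $ j" "mat_nonneg Y"
  shows "0 \<le> y \<bullet> (Y *v x)"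
  unfolding inner_vec_def matrix_vector_mult_def inner_real_def using assms
  by (auto simp: mat_nonneg_def intro!: sum_nonneg mult_nonneg_nonneg)

lemma bil_strict:
  fixes Y1 Y2 :: "real^'n^'m"
  assumes y: "\<forall>i. 0 \<le> y $ i" "y \<noteq> 0" and x: "\<forall>j. 0 \<le> x $ j" "x \<noteq> 0" and gt: "mat_gt Y2 Y1"
  shows "y \<bullet> (Y1 *v x) < y \<bullet> (Y2 *v x)"
proof -
  obtain i0 where i0: "y $ i0 > 0" using y by (metis order_le_neq_trans vec_eq_iff zero_index)
  obtain j0 where j0: "x $ j0 > 0" using x by (metis order_le_neq_trans vec_eq_iff zero_index)
  let ?D = "Y2 - Y1"
  have Dpos: "?D $ i $ j > 0" for i j using gt by (simp add: mat_gt_def)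
  have "0 < (\<Sum>i\<in>UNIV. y $ i * (\<Sum>j\<in>UNIV. ?D $ i $ j * x $ j))"
  proof (rule sum_pos2[of UNIV i0])
    show "0 < y $ i0 * (\<Sum>j\<in>UNIV. ?D $ i0 $ j * x $ j)"
    proof (rule mult_pos_pos[OF i0])
      show "0 < (\<Sum>j\<in>UNIV. ?D $ i0 $ j * x $ j)"
      proof (rule sum_pos2[of UNIV j0])
        show "0 < ?D $ i0 $ j0 * x $ j0" using Dpos j0 by simp
        fix i
        have "0 \<le> ?D $ i0 $ i" using Dpos[of i0 i] by (rule less_imp_le)
        then show "0 \<le> ?D $ i0 $ i * x $ i" using x(1) by simp
      qed auto
    qed
    fix i
    have "0 \<le> ?D $ i $ j" for j using Dpos[of i j] by (rule less_imp_le)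
    then show "0 \<le> y $ i * (\<Sum>j\<in>UNIV. ?D $ i $ j * x $ j)"
      using y(1) x(1) by (auto intro!: mult_nonneg_nonneg sum_nonneg)
  qed auto
  also have "\<dots> = y \<bullet> (?D *v x)"
    by (simp add: inner_vec_def matrix_vector_mult_def)
  also have "\<dots> = y \<bullet> (Y2 *v x) - y \<bullet> (Y1 *v x)"
    by (simp add: matrix_vector_mult_diff_rdistrib inner_diff_right)
  finally show ?thesis by simp
qed

lemma final_ineq:
  fixes r s a1 a2 :: real
  assumes "0 < r" "0 < s" "r < 1" "s < 1" "0 \<le> a1" "a1 < a2" "r * (1 - s) * a2 \<le> s * (1 - r) * a1"
  shows "r < s"
proof (rule ccontr)
  assume "\<not> r < s"
  then have rs: "s * (1 - r) \<le> r * (1 - s)" by (simp add: algebra_simps)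
  have pos: "0 < s * (1 - r)" using assms by simp
  have "s * (1 - r) * a1 < s * (1 - r) * a2" by (rule mult_strict_left_mono[OF assms(6) pos])
  also have "\<dots> \<le> r * (1 - s) * a2" using rs assms(5,6) by (intro mult_right_mono) auto
  finally show False using assms(7) by simp
qed



theorem theorem3p14:
  fixes A1 A2 U1 V1 U2 V2 :: "real^'n^'m"
  assumes types: "(pwr_splitting_I A1 U1 V1 \<and> pwr_splitting_II A2 U2 V2) \<or>
                  (pwr_splitting_II A1 U1 V1 \<and> pwr_splitting_I A2 U2 V2)"
    and rho1: "spectral_radius (mp_inverse U1 ** V1) > 0"
    and rho2: "spectral_radius (mp_inverse U2 ** V2) > 0"
    and V1nz: "V1 \<noteq> 0" and V2nz: "V2 \<noteq> 0"
    and Agt: "mat_gt (mp_inverse A2) (mp_inverse A1)"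
    and A1nn: "mat_nonneg (mp_inverse A1)"
    and Vle: "mat_le V1 V2"
  shows "spectral_radius (mp_inverse U1 ** V1) < spectral_radius (mp_inverse U2 ** V2) \<and>
         spectral_radius (mp_inverse U2 ** V2) < 1"
proof -
  let ?r1 = "spectral_radius (mp_inverse U1 ** V1)"
  let ?r2 = "spectral_radius (mp_inverse U2 ** V2)"
  let ?Y1 = "mp_inverse A1" and ?Y2 = "mp_inverse A2"
  have A2nn: "mat_nonneg ?Y2"
    using Agt A1nn unfolding mat_gt_def mat_nonneg_def by (meson less_imp_le order_trans)
  have key: "\<exists>x y. (\<forall>i. 0 \<le> y $ i) \<and> y \<noteq> 0 \<and> (\<forall>i. 0 \<le> x $ i) \<and> x \<noteq> 0 \<and> ?r1 < 1 \<and> ?r2 < 1 \<and>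
     ?r1 * (1 - ?r2) * (y \<bullet> (?Y2 *v x)) \<le> ?r2 * (1 - ?r1) * (y \<bullet> (?Y1 *v x))"
    using types
  proof
    assume c: "pwr_splitting_I A1 U1 V1 \<and> pwr_splitting_II A2 U2 V2"
    obtain y where y: "\<forall>i. 0 \<le> y $ i" "y \<noteq> 0" "\<forall>i. 0 \<le> (y v* mp_inverse U1) $ i"
      "(y v* mp_inverse U1) v* V1 = ?r1 *\<^sub>R y"
      "y v* mp_inverse U1 = (1 - ?r1) *\<^sub>R (y v* ?Y1)" "?r1 < 1"
      using typeI_vec[OF conjunct1[OF c] A1nn rho1] by blast
    obtain x where x: "\<forall>i. 0 \<le> x $ i" "x \<noteq> 0" "\<forall>i. 0 \<le> (mp_inverse U2 *v x) $ i"
      "V2 *v (mp_inverse U2 *v x) = ?r2 *\<^sub>R x"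
      "mp_inverse U2 *v x = (1 - ?r2) *\<^sub>R (?Y2 *v x)" "?r2 < 1"
      using typeII_vec[OF conjunct2[OF c] A2nn rho2] by blast
    let ?p = "y v* mp_inverse U1" and ?q = "mp_inverse U2 *v x"
    have le: "?p \<bullet> (V1 *v ?q) \<le> ?p \<bullet> (V2 *v ?q)" by (rule bil_mono[OF y(3) x(3) Vle])
    have e1: "?p \<bullet> (V1 *v ?q) = ?r1 * (1 - ?r2) * (y \<bullet> (?Y2 *v x))"
    proof -
      have "?p \<bullet> (V1 *v ?q) = (?p v* V1) \<bullet> ?q" by (rule dot_lmul_matrix[symmetric])
      also have "\<dots> = (?r1 *\<^sub>R y) \<bullet> ((1 - ?r2) *\<^sub>R (?Y2 *v x))" by (simp only: y(4) x(5))
      also have "\<dots> = ?r1 * (1 - ?r2) * (y \<bullet> (?Y2 *v x))" by simp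
      finally show ?thesis .
    qed
    have e2: "?p \<bullet> (V2 *v ?q) = ?r2 * (1 - ?r1) * (y \<bullet> (?Y1 *v x))"
    proof -
      have "?p \<bullet> (V2 *v ?q) = ((1 - ?r1) *\<^sub>R (y v* ?Y1)) \<bullet> (?r2 *\<^sub>R x)" by (simp only: y(5) x(4))
      also have "\<dots> = ?r2 * (1 - ?r1) * ((y v* ?Y1) \<bullet> x)" by simp
      also have "(y v* ?Y1) \<bullet> x = y \<bullet> (?Y1 *v x)" by (rule dot_lmul_matrix)
      finally show ?thesis .
    qed
    show ?thesis using le e1 e2 x(1,2,6) y(1,2,6) by metis
  next
    assume c: "pwr_splitting_II A1 U1 V1 \<and> pwr_splitting_I A2 U2 V2"
    obtain x where x: "\<forall>i. 0 \<le> x $ i" "x \<noteq> 0" "\<forall>i. 0 \<le> (mp_inverse U1 *v x) $ i"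
      "V1 *v (mp_inverse U1 *v x) = ?r1 *\<^sub>R x"
      "mp_inverse U1 *v x = (1 - ?r1) *\<^sub>R (?Y1 *v x)" "?r1 < 1"
      using typeII_vec[OF conjunct1[OF c] A1nn rho1] by blast
    obtain y where y: "\<forall>i. 0 \<le> y $ i" "y \<noteq> 0" "\<forall>i. 0 \<le> (y v* mp_inverse U2) $ i"
      "(y v* mp_inverse U2) v* V2 = ?r2 *\<^sub>R y"
      "y v* mp_inverse U2 = (1 - ?r2) *\<^sub>R (y v* ?Y2)" "?r2 < 1"
      using typeI_vec[OF conjunct2[OF c] A2nn rho2] by blast
    let ?p = "y v* mp_inverse U2" and ?q = "mp_inverse U1 *v x"
    have le: "?p \<bullet> (V1 *v ?q) \<le> ?p \<bullet> (V2 *v ?q)" by (rule bil_mono[OF y(3) x(3) Vle])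
    have e1: "?p \<bullet> (V1 *v ?q) = ?r1 * (1 - ?r2) * (y \<bullet> (?Y2 *v x))"
    proof -
      have "?p \<bullet> (V1 *v ?q) = ((1 - ?r2) *\<^sub>R (y v* ?Y2)) \<bullet> (?r1 *\<^sub>R x)" by (simp only: y(5) x(4))
      also have "\<dots> = ?r1 * (1 - ?r2) * ((y v* ?Y2) \<bullet> x)" by simp
      also have "(y v* ?Y2) \<bullet> x = y \<bullet> (?Y2 *v x)" by (rule dot_lmul_matrix)
      finally show ?thesis .
    qed
    have e2: "?p \<bullet> (V2 *v ?q) = ?r2 * (1 - ?r1) * (y \<bullet> (?Y1 *v x))"
    proof -
      have "?p \<bullet> (V2 *v ?q) = (?p v* V2) \<bullet> ?q" by (rule dot_lmul_matrix[symmetric])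
      also have "\<dots> = (?r2 *\<^sub>R y) \<bullet> ((1 - ?r1) *\<^sub>R (?Y1 *v x))" by (simp only: y(4) x(5))
      also have "\<dots> = ?r2 * (1 - ?r1) * (y \<bullet> (?Y1 *v x))" by simp
      finally show ?thesis .
    qed
    show ?thesis using le e1 e2 x(1,2,6) y(1,2,6) by metis
  qed
  then obtain x y where xy: "\<forall>i. 0 \<le> y $ i" "y \<noteq> 0" "\<forall>i. 0 \<le> x $ i" "x \<noteq> 0" "?r1 < 1" "?r2 < 1"
     "?r1 * (1 - ?r2) * (y \<bullet> (?Y2 *v x)) \<le> ?r2 * (1 - ?r1) * (y \<bullet> (?Y1 *v x))"
    by blast
  have a1: "0 \<le> y \<bullet> (?Y1 *v x)" by (rule bil_nonneg[OF xy(1) xy(3) A1nn])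
  have a12: "y \<bullet> (?Y1 *v x) < y \<bullet> (?Y2 *v x)" by (rule bil_strict[OF xy(1,2) xy(3,4) Agt])
  have "?r1 < ?r2" by (rule final_ineq[OF rho1 rho2 xy(5,6) a1 a12 xy(7)])
  with xy(6) show ?thesis by simp
qed

end
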